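(* Let $\Omega\subsetneq\mathbb{S}^m$ be a domain and $\rho\in C^1(\Omega)$. Then the associated map $\phi:\Omega\to\mathbb{H}^{m+1}$ is proper if and only if, for every $p\in\partial\Omega$, $$\lim_{x\to p}\big(\rho(x)^2+|\nabla\rho(x)|^2\big)=+\infty .$$
   Context: $\mathbb{S}^m\subset\mathbb{R}^{m+1}$ is the unit sphere with round metric $g_0$; $\nabla$ and $|\cdot|$ denote gradient and norm with respect to $g_0$ (so $\nabla\rho(x)\in T_x\mathbb{S}^m\subset\mathbb{R}^{m+1}$). Let $\mathbb{L}^{m+2}$ be $\mathbb{R}^{m+2}$ with the Lorentzian inner product $\langle\!\langle x,y\rangle\!\rangle=-x_0y_0+\sum_{i=1}^{m+1}x_iy_i$, and $\mathbb{H}^{m+1}=\{x\in\mathbb{L}^{m+2}:\langle\!\langle x,x\rangle\!\rangle=-1,\ x_0>0\}$ (hyperboloid model of hyperbolic space). For a domain $\Omega\subset\mathbb{S}^m$ and $\rho\in C^1(\Omega)$, the associated map $\phi=\phi^\rho:\Omega\to\mathbb{H}^{m+1}$ is $$\phi(x)=\frac{e^{\rho(x)}}{2}\Big(1+e^{-2\rho(x)}\big(1+|\nabla\rho(x)|^2\big)\Big)(1,x)+e^{-\rho(x)}\big(0,-x+\nabla\rho(x)\big).$$ A map is proper if preimages of compact subsets of $\mathbb{H}^{m+1}$ are compact in $\Omega$. *)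

theory Defs
  imports "HOL-Analysis.Analysis"
begin

text \<open>The ambient space R^(m+1) is an arbitrary Euclidean space 'a; the unit sphere
  S^m is sphere 0 1. The Lorentz space L^(m+2) is real \<times> 'a, first coordinate x_0.\<close>

definition lorentz :: "real \<times> 'a::euclidean_space \<Rightarrow> real \<times> 'a \<Rightarrow> real" where
  "lorentz x y = - fst x * fst y + snd x \<bullet> snd y"

definition hyperbolic_space :: "(real \<times> 'a::euclidean_space) set" where
  "hyperbolic_space = {x. lorentz x x = -1 \<and> fst x > 0}"

definition sphere_domain :: "'a::euclidean_space set \<Rightarrow> bool" where
  "sphere_domain \<Omega> \<longleftrightarrow> \<Omega> \<noteq> {} \<and> openin (top_of_set (sphere 0 1)) \<Omega> \<and> connected \<Omega>"

text \<open>Spherical gradient: the (unique) tangent vector v at x with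
  \<rho>(y) = \<rho>(x) + v \<bullet> (y - x) + o(|y - x|) for y in \<Omega>, i.e. the round-metric gradient.\<close>
definition has_sphere_gradient ::
  "('a::euclidean_space \<Rightarrow> real) \<Rightarrow> 'a set \<Rightarrow> 'a \<Rightarrow> 'a \<Rightarrow> bool" where
  "has_sphere_gradient \<rho> \<Omega> x v \<longleftrightarrow>
     v \<bullet> x = 0 \<and> (\<rho> has_derivative (\<lambda>h. v \<bullet> h)) (at x within \<Omega>)"

definition sphere_grad :: "('a::euclidean_space \<Rightarrow> real) \<Rightarrow> 'a set \<Rightarrow> 'a \<Rightarrow> 'a" where
  "sphere_grad \<rho> \<Omega> x = (THE v. has_sphere_gradient \<rho> \<Omega> x v)"

definition C1_on_sphere :: "'a::euclidean_space set \<Rightarrow> ('a \<Rightarrow> real) \<Rightarrow> bool" where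
  "C1_on_sphere \<Omega> \<rho> \<longleftrightarrow> (\<forall>x\<in>\<Omega>. \<exists>v. has_sphere_gradient \<rho> \<Omega> x v)
      \<and> continuous_on \<Omega> (sphere_grad \<rho> \<Omega>)"

definition assoc_map ::
  "'a::euclidean_space set \<Rightarrow> ('a \<Rightarrow> real) \<Rightarrow> 'a \<Rightarrow> real \<times> 'a" where
  "assoc_map \<Omega> \<rho> x =
     (let r = \<rho> x; g = sphere_grad \<rho> \<Omega> x;
          c = exp r / 2 * (1 + exp (-2 * r) * (1 + (norm g)\<^sup>2))
      in (c, c *\<^sub>R x) + exp (- r) *\<^sub>R (0, - x + g))"

definition proper_map_into :: "('a \<Rightarrow> 'b::topological_space) \<Rightarrow> 'a::topological_space set \<Rightarrow> 'b set \<Rightarrow> bool" where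
  "proper_map_into f A B \<longleftrightarrow> (\<forall>K. K \<subseteq> B \<and> compact K \<longrightarrow> compact {x\<in>A. f x \<in> K})"

end

theory Submission
  imports Defs
begin


lemma grad_unique:
  fixes \<Omega> :: "'a::euclidean_space set"
  assumes om: "openin (top_of_set (sphere 0 1)) \<Omega>" and x: "x \<in> \<Omega>"
    and v: "has_sphere_gradient \<rho> \<Omega> x v" and w: "has_sphere_gradient \<rho> \<Omega> x w"
  shows "v = w"
proof (rule ccontr)
  assume "v \<noteq> w"
  define u where "u = v - w"
  have u0: "u \<noteq> 0" using \<open>v \<noteq> w\<close> by (simp add: u_def)
  have ux: "u \<bullet> x = 0" using v w by (simp add: u_def has_sphere_gradient_def inner_diff_left)
  have nx: "norm x = 1" using openin_subset[OF om] x by auto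
  obtain e where e: "e > 0" "ball x e \<inter> sphere 0 1 \<subseteq> \<Omega>"
    using om x unfolding openin_contains_ball by blast
  define \<epsilon> where "\<epsilon> = norm u / 8"
  have ep: "\<epsilon> > 0" using u0 by (simp add: \<epsilon>_def)
  obtain d1 where d1: "d1 > 0" "\<forall>y\<in>\<Omega>. norm (y - x) < d1 \<longrightarrow>
      norm (\<rho> y - \<rho> x - v \<bullet> (y - x)) \<le> \<epsilon> * norm (y - x)"
    using v ep unfolding has_sphere_gradient_def has_derivative_within_alt by blast
  obtain d2 where d2: "d2 > 0" "\<forall>y\<in>\<Omega>. norm (y - x) < d2 \<longrightarrow>
      norm (\<rho> y - \<rho> x - w \<bullet> (y - x)) \<le> \<epsilon> * norm (y - x)"
    using w ep unfolding has_sphere_gradient_def has_derivative_within_alt by blast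
  define r where "r = min e (min d1 d2)"
  have r: "r > 0" using e d1 d2 by (simp add: r_def)
  define \<delta> where "\<delta> = min (1/2) (r\<^sup>2/4)"
  have dpos: "\<delta> > 0" "\<delta> \<le> 1/2" "2 * \<delta> < r\<^sup>2"
    using r by (auto simp: \<delta>_def min_def)
  define a where "a = 1 - \<delta>"
  define b where "b = sqrt (1 - a\<^sup>2)"
  have b2: "b\<^sup>2 = 1 - a\<^sup>2" unfolding b_def a_def using dpos
    by (intro real_sqrt_pow2) (auto simp: power2_eq_square algebra_simps)
  define uh where "uh = u /\<^sub>R norm u"
  have uhu: "uh \<bullet> uh = 1" using u0 by (simp add: uh_def dot_square_norm)
  have uhx: "uh \<bullet> x = 0" using ux by (simp add: uh_def)
  have xx: "x \<bullet> x = 1" using nx by (simp add: dot_square_norm)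
  define y where "y = a *\<^sub>R x + b *\<^sub>R uh"
  have ny: "norm y = 1"
  proof -
    have "(norm y)\<^sup>2 = a\<^sup>2 * (x \<bullet> x) + 2 * a * b * (uh \<bullet> x) + b\<^sup>2 * (uh \<bullet> uh)"
      unfolding y_def power2_norm_eq_inner by (simp add: inner_add_left inner_add_right
          inner_commute power2_eq_square algebra_simps)
    also have "\<dots> = 1" using b2 uhu uhx xx by simp
    finally show ?thesis using norm_ge_zero[of y] by (auto simp add: power2_eq_1_iff)
  qed
  have nyx2: "(norm (y - x))\<^sup>2 = 2 * \<delta>"
  proof -
    have "y - x = (a - 1) *\<^sub>R x + b *\<^sub>R uh" by (simp add: y_def algebra_simps)
    then have "(norm (y - x))\<^sup>2 = (a-1)\<^sup>2 * (x \<bullet> x) + 2 * (a-1) * b * (uh \<bullet> x) + b\<^sup>2 * (uh \<bullet> uh)"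
      unfolding power2_norm_eq_inner by (simp add: inner_add_left inner_add_right
          inner_commute power2_eq_square algebra_simps)
    also have "\<dots> = 2 * \<delta>" using b2 uhu uhx xx by (simp add: a_def power2_eq_square algebra_simps)
    finally show ?thesis .
  qed
  have nyx: "norm (y - x) < r"
    by (rule power2_less_imp_less) (use nyx2 dpos r in auto)
  have yO: "y \<in> \<Omega>" using e ny nyx by (auto simp: r_def dist_norm norm_minus_commute)
  have "\<bar>u \<bullet> (y - x)\<bar> \<le> 2 * \<epsilon> * norm (y - x)"
  proof -
    have "u \<bullet> (y - x) = (\<rho> y - \<rho> x - w \<bullet> (y - x)) - (\<rho> y - \<rho> x - v \<bullet> (y - x))"
      by (simp add: u_def inner_diff_left)
    moreover have "norm (\<rho> y - \<rho> x - v \<bullet> (y - x)) \<le> \<epsilon> * norm (y - x)"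
      using d1 yO nyx by (auto simp: r_def)
    moreover have "norm (\<rho> y - \<rho> x - w \<bullet> (y - x)) \<le> \<epsilon> * norm (y - x)"
      using d2 yO nyx by (auto simp: r_def)
    ultimately show ?thesis by auto
  qed
  moreover have "u \<bullet> (y - x) = b * norm u"
    using u0 ux by (simp add: y_def uh_def inner_diff_right inner_add_right dot_square_norm power2_eq_square)
  moreover have "b \<ge> 0"
  proof -
    have "0 \<le> a" "a \<le> 1" using dpos by (auto simp: a_def)
    then have "a * a \<le> 1" by (metis mult_le_one)
    then show ?thesis by (simp add: b_def power2_eq_square)
  qed
  ultimately have "b * norm u \<le> norm u / 4 * norm (y - x)" by (simp add: \<epsilon>_def)
  then have "b \<le> norm (y - x) / 4" using u0 by (simp add: field_simps)
  then have "b\<^sup>2 \<le> (norm (y - x) / 4)\<^sup>2" using \<open>b \<ge> 0\<close> by (intro power_mono) auto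
  then have "1 - a\<^sup>2 \<le> 2 * \<delta> / 16" using b2 nyx2 by (simp add: power_divide)
  then show False using dpos by (simp add: a_def power2_eq_square algebra_simps)
qed



lemma fst_assoc: "fst (assoc_map \<Omega> \<rho> x) =
   (exp (\<rho> x) + exp (- \<rho> x) * (1 + (norm (sphere_grad \<rho> \<Omega> x))\<^sup>2)) / 2"
proof -
  have e: "exp (\<rho> x) * exp (-2 * \<rho> x) = exp (- \<rho> x)" by (simp add: exp_add[symmetric])
  have "fst (assoc_map \<Omega> \<rho> x) = exp (\<rho> x) / 2 * (1 + exp (-2 * \<rho> x) * (1 + (norm (sphere_grad \<rho> \<Omega> x))\<^sup>2))"
    by (simp add: assoc_map_def Let_def)
  also have "\<dots> = (exp (\<rho> x) + (exp (\<rho> x) * exp (-2 * \<rho> x)) * (1 + (norm (sphere_grad \<rho> \<Omega> x))\<^sup>2)) / 2"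
    by (simp only: ring_distribs mult.assoc times_divide_eq_left mult_1_right add_divide_distrib)
  finally show ?thesis by (simp only: e)
qed

lemma assoc_H:
  fixes x :: "'a::euclidean_space"
  assumes "norm x = 1" "sphere_grad \<rho> \<Omega> x \<bullet> x = 0"
  shows "assoc_map \<Omega> \<rho> x \<in> hyperbolic_space"
proof -
  define r where "r = \<rho> x"
  define g where "g = sphere_grad \<rho> \<Omega> x"
  define e where "e = exp (- r)"
  define s where "s = (norm g)\<^sup>2"
  define c where "c = exp r / 2 * (1 + exp (-2 * r) * (1 + s))"
  have ee: "exp r * e = 1" "exp (-2 * r) = e * e" by (simp_all add: e_def exp_add[symmetric] exp_minus_inverse)
  have c2: "2 * c * e = 1 + e * e * (1 + s)" unfolding c_def using ee by (simp add: algebra_simps)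
  have A: "assoc_map \<Omega> \<rho> x = (c, c *\<^sub>R x + e *\<^sub>R (g - x))"
    unfolding assoc_map_def Let_def c_def e_def r_def g_def s_def by (simp add: algebra_simps)
  have xx: "x \<bullet> x = 1" using assms(1) by (simp add: dot_square_norm)
  have gx: "g \<bullet> x = 0" using assms(2) by (simp add: g_def)
  have gg: "g \<bullet> g = s" by (simp add: s_def dot_square_norm)
  have "(c *\<^sub>R x + e *\<^sub>R (g - x)) \<bullet> (c *\<^sub>R x + e *\<^sub>R (g - x))
        = c*c*(x \<bullet> x) + 2*c*e*(g \<bullet> x) - 2*c*e*(x \<bullet> x) + e*e*(g \<bullet> g) - 2*e*e*(g \<bullet> x) + e*e*(x \<bullet> x)"
    by (simp add: inner_add_left inner_add_right inner_diff_left inner_diff_right inner_commute algebra_simps)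
  also have "\<dots> = c*c - 1" using xx gx gg c2 by (simp add: algebra_simps)
  finally have "lorentz (assoc_map \<Omega> \<rho> x) (assoc_map \<Omega> \<rho> x) = -1"
    unfolding A lorentz_def by simp
  moreover have "c > 0" unfolding c_def by (simp add: s_def add_pos_nonneg)
  ultimately show ?thesis unfolding hyperbolic_space_def using A by simp
qed

lemma bound1:
  fixes r s M :: real
  assumes "s \<ge> 0" "(exp r + exp (- r) * (1 + s)) / 2 \<le> M"
  shows "r\<^sup>2 + s \<le> 8 * M\<^sup>2"
proof -
  have p1: "exp (- r) * (1 + s) > 0" using assms by simp
  have s2: "exp r + exp (- r) * (1 + s) \<le> 2 * M" using assms(2) by simp
  have er: "exp r \<le> 2 * M" using s2 p1 by linarith
  have emr: "exp (- r) \<le> 2 * M" 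
  proof -
    have "exp (-r) \<le> exp (-r) * (1 + s)" using assms(1) by simp
    moreover have "exp r > 0" by simp
    ultimately show ?thesis using s2 by linarith
  qed
  have "\<bar>r\<bar> < exp \<bar>r\<bar>" by (meson exp_gt_self)
  also have "exp \<bar>r\<bar> \<le> 2 * M" using er emr by (cases "r \<ge> 0") auto
  finally have ra: "\<bar>r\<bar> \<le> 2 * M" by simp
  have "r\<^sup>2 \<le> (2 * M)\<^sup>2" using ra by (metis abs_ge_zero power2_abs power_mono)
  moreover have "1 + s \<le> 4 * M\<^sup>2"
  proof -
    have q: "exp (- r) * (1 + s) \<le> 2 * M" using s2 exp_gt_zero[of r] by linarith
    have "exp r * (exp (- r) * (1 + s)) \<le> exp r * (2 * M)" using q by (intro mult_left_mono) auto
    also have "\<dots> \<le> (2 * M) * (2 * M)" using er ra by (intro mult_right_mono) auto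
    finally show ?thesis by (simp add: exp_minus_inverse mult.assoc[symmetric] power2_eq_square)
  qed
  ultimately show ?thesis by (simp add: power_mult_distrib)
qed

lemma bound2:
  fixes r s N :: real
  assumes "s \<ge> 0" "r\<^sup>2 + s \<le> N"
  shows "(exp r + exp (- r) * (1 + s)) / 2 \<le> exp (N + 1) * (1 + N)"
proof -
  have "\<bar>r\<bar> \<le> r\<^sup>2 + 1"
  proof (cases "\<bar>r\<bar> \<le> 1")
    case True then show ?thesis using zero_le_power2[of r] by linarith
  next
    case False
    then have "\<bar>r\<bar> * 1 \<le> \<bar>r\<bar> * \<bar>r\<bar>" by (intro mult_left_mono) auto
    then have "\<bar>r\<bar> \<le> r\<^sup>2" by (simp add: power2_eq_square abs_mult_self_eq)
    then show ?thesis by linarith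
  qed
  then have ra: "\<bar>r\<bar> \<le> N + 1" using assms by linarith
  have a: "exp r \<le> exp (N + 1)" "exp (- r) \<le> exp (N + 1)" using ra by auto
  have "exp (- r) * (1 + s) \<le> exp (N + 1) * (1 + s)" using a assms by (intro mult_right_mono) auto
  moreover have "s \<le> N" using assms zero_le_power2[of r] by linarith
  moreover have "0 \<le> N" using assms zero_le_power2[of r] by linarith
  ultimately have "exp r + exp (- r) * (1 + s) \<le> exp (N + 1) * (2 + N)"
  proof -
    have "exp (N + 1) * (1 + s) \<le> exp (N + 1) * (1 + N)" using \<open>s \<le> N\<close> by (intro mult_left_mono) auto
    moreover have "exp (N + 1) * (2 + N) = exp (N + 1) + exp (N + 1) * (1 + N)" by (simp add: algebra_simps)
    ultimately show ?thesis using a \<open>exp (- r) * (1 + s) \<le> exp (N + 1) * (1 + s)\<close>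
      by linarith
  qed
  also have "\<dots> \<le> exp (N + 1) * (1 + N) * 2" using \<open>0 \<le> N\<close> by (simp add: algebra_simps)
  finally show ?thesis by simp
qed


lemma cont_rho:
  assumes "\<forall>x\<in>\<Omega>. \<exists>v. has_sphere_gradient \<rho> \<Omega> x v"
  shows "continuous_on \<Omega> \<rho>"
  unfolding continuous_on_eq_continuous_within
proof
  fix x assume "x \<in> \<Omega>"
  then obtain v where "has_sphere_gradient \<rho> \<Omega> x v" using assms by blast
  then show "continuous (at x within \<Omega>) \<rho>"
    unfolding has_sphere_gradient_def using has_derivative_continuous by blast
qed

lemma cont_phi:
  assumes "continuous_on \<Omega> \<rho>" "continuous_on \<Omega> (sphere_grad \<rho> \<Omega>)"
  shows "continuous_on \<Omega> (assoc_map \<Omega> \<rho>)"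
  unfolding assoc_map_def Let_def using assms by (intro continuous_intros) auto

lemma K_compact:
  fixes M :: real
  assumes "M \<ge> 0"
  shows "compact {y :: real \<times> 'a::euclidean_space. lorentz y y = -1 \<and> 0 \<le> fst y \<and> fst y \<le> M}"
    (is "compact ?K")
proof -
  have "?K = {y. - fst y * fst y + snd y \<bullet> snd y = -1} \<inter> {y. 0 \<le> fst y} \<inter> {y. fst y \<le> M}"
    by (auto simp: lorentz_def)
  moreover have "closed \<dots>"
    by (intro closed_Int closed_Collect_eq closed_Collect_le continuous_intros)
  ultimately have cl: "closed ?K" by simp
  have "bounded ?K" unfolding bounded_iff
  proof (intro exI ballI)
    fix y :: "real \<times> 'a" assume y: "y \<in> ?K"
    then have "(norm (snd y))\<^sup>2 = fst y * fst y - 1" by (simp add: lorentz_def dot_square_norm)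
    also have "\<dots> \<le> M\<^sup>2"
    proof -
      have "fst y * fst y \<le> M * M" using y by (intro mult_mono) auto
      then show ?thesis by (simp add: power2_eq_square)
    qed
    finally have "norm (snd y) \<le> M" using assms by (simp add: power2_le_iff_abs_le)
    moreover have "norm (fst y) \<le> M" using y by simp
    moreover have "norm y \<le> norm (fst y) + norm (snd y)"
      using norm_Pair_le[of "fst y" "snd y"] by simp
    ultimately show "norm y \<le> 2 * M" by simp
  qed
  then show ?thesis using cl by (simp add: compact_eq_bounded_closed)
qed

lemma fst_le_norm: "fst (y :: real \<times> 'a::real_normed_vector) \<le> norm y"
proof -
  have "norm (fst y) \<le> norm (fst y, snd y)" by (rule norm_fst_le)
  then show ?thesis by simp
qed

definition KM :: "real \<Rightarrow> (real \<times> 'a::euclidean_space) set" where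
  "KM M = {y. lorentz y y = -1 \<and> 0 \<le> fst y \<and> fst y \<le> M}"

lemma KM_H: "KM M \<subseteq> hyperbolic_space"
proof
  fix y assume y: "y \<in> (KM M)"
  have "fst y \<noteq> 0"
  proof
    assume "fst y = 0"
    then have "snd y \<bullet> snd y = -1" using y by (simp add: KM_def lorentz_def)
    then show False by (metis inner_ge_zero neg_0_le_iff_le not_one_le_zero)
  qed
  then show "y \<in> hyperbolic_space" using y by (auto simp: KM_def hyperbolic_space_def)
qed

lemma KM_compact: "M \<ge> 0 \<Longrightarrow> compact (KM M)"
  unfolding KM_def by (rule K_compact)

theorem mainTheorem1:
  fixes \<Omega> :: "'a::euclidean_space set" and \<rho> :: "'a \<Rightarrow> real"
  assumes "sphere_domain \<Omega>" and "\<Omega> \<noteq> sphere 0 1"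
    and "C1_on_sphere \<Omega> \<rho>"
  shows "proper_map_into (assoc_map \<Omega> \<rho>) \<Omega> hyperbolic_space \<longleftrightarrow>
    (\<forall>p \<in> closure \<Omega> - \<Omega>.
       filterlim (\<lambda>x. (\<rho> x)\<^sup>2 + (norm (sphere_grad \<rho> \<Omega> x))\<^sup>2) at_top (at p within \<Omega>))"
proof -
  have om: "openin (top_of_set (sphere 0 1)) \<Omega>" using assms(1) by (simp add: sphere_domain_def)
  have sub: "\<Omega> \<subseteq> sphere 0 1" using openin_subset[OF om] by simp
  have ex: "\<forall>x\<in>\<Omega>. \<exists>v. has_sphere_gradient \<rho> \<Omega> x v"
    and cg: "continuous_on \<Omega> (sphere_grad \<rho> \<Omega>)" using assms(3) by (auto simp: C1_on_sphere_def)
  have grad: "has_sphere_gradient \<rho> \<Omega> x (sphere_grad \<rho> \<Omega> x)" if xO: "x \<in> \<Omega>" for x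
  proof -
    obtain v where v: "has_sphere_gradient \<rho> \<Omega> x v" using bspec[OF ex xO] by (elim exE)
    have u: "\<And>w. has_sphere_gradient \<rho> \<Omega> x w \<Longrightarrow> w = v"
      by (rule grad_unique[OF om xO _ v])
    have "sphere_grad \<rho> \<Omega> x = v" unfolding sphere_grad_def
      by (rule the_equality[of "\<lambda>w. has_sphere_gradient \<rho> \<Omega> x w", OF v u])
    then show ?thesis using v by simp
  qed
  define \<phi> where "\<phi> = assoc_map \<Omega> \<rho>"
  define F where "F = (\<lambda>x. (\<rho> x)\<^sup>2 + (norm (sphere_grad \<rho> \<Omega> x))\<^sup>2)"
  have H: "\<phi> x \<in> hyperbolic_space" if "x \<in> \<Omega>" for x
  proof -
    have n: "norm x = 1" using that sub by auto
    have g: "sphere_grad \<rho> \<Omega> x \<bullet> x = 0" using grad[OF that] unfolding has_sphere_gradient_def by blast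
    show ?thesis unfolding \<phi>_def by (rule assoc_H[OF n g])
  qed
  have cphi: "continuous_on \<Omega> \<phi>" unfolding \<phi>_def by (rule cont_phi[OF cont_rho[OF ex] cg])
  have b1: "F x \<le> 8 * M\<^sup>2" if "fst (\<phi> x) \<le> M" for x M
    using bound1[of "(norm (sphere_grad \<rho> \<Omega> x))\<^sup>2" "\<rho> x" M] that
    by (simp add: \<phi>_def fst_assoc F_def)
  have b2: "fst (\<phi> x) \<le> exp (N + 1) * (1 + N)" if "F x \<le> N" for x N
    using bound2[of "(norm (sphere_grad \<rho> \<Omega> x))\<^sup>2" "\<rho> x" N] that
    by (simp add: \<phi>_def fst_assoc F_def)
  show ?thesis
    unfolding \<phi>_def[symmetric] F_def[symmetric]
  proof
    assume pr: "proper_map_into \<phi> \<Omega> hyperbolic_space"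
    show "\<forall>p\<in>closure \<Omega> - \<Omega>. filterlim F at_top (at p within \<Omega>)"
    proof
      fix p assume p: "p \<in> closure \<Omega> - \<Omega>"
      show "filterlim F at_top (at p within \<Omega>)"
        unfolding filterlim_at_top
      proof
        fix Z :: real
        define N where "N = \<bar>Z\<bar>"
        define M where "M = exp (N + 1) * (1 + N)"
        have M0: "M \<ge> 0" by (simp add: M_def N_def)
        have "compact {x\<in>\<Omega>. \<phi> x \<in> (KM M)}"
          using pr KM_H KM_compact[OF M0] unfolding proper_map_into_def by blast
        then have "closed {x\<in>\<Omega>. \<phi> x \<in> (KM M)}" by (rule compact_imp_closed)
        then have "open (- {x\<in>\<Omega>. \<phi> x \<in> (KM M)})" by auto
        moreover have "p \<in> - {x\<in>\<Omega>. \<phi> x \<in> (KM M)}" using p by auto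
        ultimately have "eventually (\<lambda>x. x \<in> - {x\<in>\<Omega>. \<phi> x \<in> (KM M)}) (nhds p)"
          by (rule eventually_nhds_in_open)
        then have "eventually (\<lambda>x. x \<in> - {x\<in>\<Omega>. \<phi> x \<in> (KM M)}) (at p within \<Omega>)"
          by (rule filter_leD[OF at_within_le_nhds])
        then obtain d where d: "d > 0" "\<forall>x\<in>\<Omega>. x \<noteq> p \<and> dist x p < d \<longrightarrow> x \<in> - {x\<in>\<Omega>. \<phi> x \<in> (KM M)}"
          unfolding eventually_at by blast
        show "eventually (\<lambda>x. Z \<le> F x) (at p within \<Omega>)"
          unfolding eventually_at
        proof (intro exI conjI ballI impI)
          fix x assume x: "x \<in> \<Omega>" "x \<noteq> p \<and> dist x p < d"
          then have "\<phi> x \<notin> (KM M)" using d by auto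
          moreover have "\<phi> x \<in> hyperbolic_space" using H x by simp
          ultimately have "fst (\<phi> x) > M" by (auto simp: KM_def hyperbolic_space_def)
          then have "\<not> F x \<le> N" using b2[of x N] by (auto simp: M_def)
          then show "Z \<le> F x" by (auto simp: N_def)
        qed (rule d)
      qed
    qed
  next
    assume lim: "\<forall>p\<in>closure \<Omega> - \<Omega>. filterlim F at_top (at p within \<Omega>)"
    show "proper_map_into \<phi> \<Omega> hyperbolic_space"
      unfolding proper_map_into_def
    proof (intro allI impI)
      fix K :: "(real \<times> 'a) set" assume K: "K \<subseteq> hyperbolic_space \<and> compact K"
      have "bounded K" using K by (intro compact_imp_bounded) auto
      then obtain B where B: "\<forall>y\<in>K. norm y \<le> B" unfolding bounded_iff by (elim exE)
      define P where "P = {x\<in>\<Omega>. \<phi> x \<in> K}"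
      have "closed K" using K by (intro compact_imp_closed) auto
      then have "closedin (top_of_set \<Omega>) (\<Omega> \<inter> \<phi> -` K)"
        by (rule continuous_closedin_preimage[OF cphi])
      moreover have "\<Omega> \<inter> \<phi> -` K = P" by (auto simp: P_def)
      ultimately have "\<exists>C. closed C \<and> P = \<Omega> \<inter> C" unfolding closedin_closed by simp
      then obtain C where C: "closed C" "P = \<Omega> \<inter> C" by (elim exE conjE)
      have "closure P \<subseteq> P"
      proof
        fix p assume p: "p \<in> closure P"
        have pO: "p \<in> closure \<Omega>" using p closure_mono[of P \<Omega>] by (auto simp: P_def)
        show "p \<in> P"
        proof (cases "p \<in> \<Omega>")
          case True
          have "closure P \<subseteq> C" using C by (intro closure_minimal) auto
          then show ?thesis using True p C by auto
        next
          case False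
          then have "filterlim F at_top (at p within \<Omega>)" using lim pO by auto
          then have "eventually (\<lambda>x. 8 * B\<^sup>2 + 1 \<le> F x) (at p within \<Omega>)"
            unfolding filterlim_at_top by (rule spec)
          then obtain d where d: "d > 0" "\<forall>x\<in>\<Omega>. x \<noteq> p \<and> dist x p < d \<longrightarrow> 8 * B\<^sup>2 + 1 \<le> F x"
            unfolding eventually_at by (elim exE conjE)
          have "\<exists>y\<in>P. dist y p < d" using p d(1) unfolding closure_approachable by simp
          then obtain y where y: "y \<in> P" "dist y p < d" by (elim bexE)
          have "y \<in> \<Omega>" "\<phi> y \<in> K" using y by (auto simp: P_def)
          then have "y \<noteq> p" using False by auto
          then have "8 * B\<^sup>2 + 1 \<le> F y" using d(2) y \<open>y \<in> \<Omega>\<close> by simp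
          moreover have "fst (\<phi> y) \<le> B" using bspec[OF B \<open>\<phi> y \<in> K\<close>] fst_le_norm[of "\<phi> y"] by linarith
          ultimately show ?thesis using b1[of y B] by simp
        qed
      qed
      then have "closed P" by (simp only: closure_subset_eq)
      moreover have "bounded P" using sub by (intro bounded_subset[OF bounded_sphere]) (auto simp: P_def)
      ultimately show "compact {x\<in>\<Omega>. \<phi> x \<in> K}" unfolding P_def[symmetric]
        by (simp add: compact_eq_bounded_closed)
    qed
  qed
qed

end
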